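(* Let $X$ and $a$ be variables, let $C_k=\frac1{k+1}\binom{2k}{k}$ denote the Catalan numbers, and let $U_n(x)$ be the Chebyshev polynomials of the second kind, defined by $\sum_{n\ge0}U_n(x)z^n=\frac1{1-2xz+z^2}$, with $U_{-1}(x)=0$. Then for all positive integers $n$, $$\det_{0\le i,j\le n-1}\left(X(-2a)^{i+j}+\sum_{k=0}^{\lfloor(i+j-1)/2\rfloor}(-2a)^{i+j-2k-1}C_k\right)=(-1)^{n-1}\big(XU_{n-1}(-a)+U_{n-2}(-a)\big).$$
   Context: An empty sum (when $\lfloor(i+j-1)/2\rfloor<0$) equals $0$. *)

theory Defs
  imports "Jordan_Normal_Form.Determinant" "HOL-Computational_Algebra.Formal_Power_Series"
begin

text \<open>Catalan numbers C_k = binom(2k,k)/(k+1) (the division is exact).\<close>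
definition catalan :: "nat \<Rightarrow> nat" where
  "catalan k = ((2*k) choose k) div (k+1)"

definition chebU :: "'a::field \<Rightarrow> int \<Rightarrow> 'a" where
  "chebU x n = (if n < 0 then 0 else
     fps_nth (inverse (1 - fps_const (2*x) * fps_X + fps_X^2)) (nat n))"

end

theory Submission
  imports Defs
begin


lemma chebU_nat:
  fixes x :: "'a::field"
  defines "F \<equiv> inverse (1 - fps_const (2*x) * fps_X + fps_X^2)"
  shows "fps_nth F 0 = 1" and "fps_nth F (Suc 0) = 2*x"
    and "fps_nth F (Suc (Suc n)) = 2*x*fps_nth F (Suc n) - fps_nth F n"
proof -
  let ?D = "1 - fps_const (2*x) * fps_X + fps_X^2 :: 'a fps"
  have D0: "fps_nth ?D 0 = 1" by simp
  have FD: "F * ?D = 1" unfolding F_def by (rule inverse_mult_eq_1) (simp)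
  have e: "F * ?D = F - fps_const (2*x) * (fps_X * F) + fps_X^2 * F"
    by (simp add: algebra_simps)
  have c: "\<And>k. fps_nth (F * ?D) k = fps_nth F k - 2*x*(if k = 0 then 0 else fps_nth F (k-1))
      + (if k < 2 then 0 else fps_nth F (k-2))"
    unfolding e by (simp add: fps_X_mult_nth fps_X_power_mult_nth)
  from c[of 0] FD show "fps_nth F 0 = 1" by simp
  with c[of 1] FD show "fps_nth F (Suc 0) = 2*x" by simp
  from c[of "Suc (Suc n)"] FD have h: "fps_nth F (Suc (Suc n)) - 2*x*fps_nth F (Suc n) + fps_nth F n = 0"
    by simp
  have "fps_nth F (Suc (Suc n)) = (fps_nth F (Suc (Suc n)) - 2*x*fps_nth F (Suc n) + fps_nth F n)
     + 2*x*fps_nth F (Suc n) - fps_nth F n" by (simp add: algebra_simps)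
  then show "fps_nth F (Suc (Suc n)) = 2*x*fps_nth F (Suc n) - fps_nth F n" using h by simp
qed

lemma chebU_rec:
  fixes x :: "'a::field"
  assumes "m \<ge> 1"
  shows "chebU x m = 2*x*chebU x (m-1) - chebU x (m-2)"
proof -
  obtain k where k: "m = int k + 1" using assms by (intro that[of "nat (m-1)"]) auto
  show ?thesis
  proof (cases k)
    case 0 then show ?thesis using k chebU_nat(2)[of x] by (simp add: chebU_def)
  next
    case (Suc j)
    have a: "nat m = Suc (Suc j)" "nat (m-1) = Suc j" "nat (m-2) = j" using k Suc by auto
    show ?thesis using k Suc chebU_nat(3)[of x j] unfolding chebU_def a by simp
  qed
qed

lemma chebU_0: "chebU x 0 = 1" using chebU_nat(1) by (simp add: chebU_def)



fun Lp :: "nat \<Rightarrow> nat \<Rightarrow> nat" where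
  "Lp 0 k = (if k = 0 then 1 else 0)"
| "Lp (Suc i) k = (case k of 0 \<Rightarrow> 0 | Suc k' \<Rightarrow> Lp i k') + Lp i (Suc k)"

lemma Lp_above: "i < k \<Longrightarrow> Lp i k = 0"
  by (induction i arbitrary: k) (auto split: nat.splits)

lemma Lp_diag: "Lp i i = 1"
  by (induction i) (auto simp: Lp_above)

lemma Lp_odd: "odd (i + k) \<Longrightarrow> Lp i k = 0"
  by (induction i arbitrary: k) (auto split: nat.splits elim: oddE)

definition Bf :: "nat \<Rightarrow> nat \<Rightarrow> int" where
  "Bf i s = int (i choose s) - (if s = 0 then 0 else int (i choose (s - 1)))"

lemma Lp_formula: "k \<le> i \<Longrightarrow> even (i + k) \<Longrightarrow> int (Lp i k) = Bf i ((i - k) div 2)"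
proof (induction i arbitrary: k)
  case 0 then show ?case by (simp add: Bf_def)
next
  case (Suc i k)
  show ?case
  proof (cases k)
    case 0
    have "odd i" using Suc.prems 0 by simp
    then obtain q where q: "i = 2*q+1" by (rule oddE)
    have "int (Lp (Suc i) k) = int (Lp i 1)" using 0 by simp
    also have "\<dots> = Bf i q" using Suc.IH[of 1] q by simp
    also have "\<dots> = Bf (Suc i) (Suc q)"
    proof (cases q)
      case 0 then show ?thesis using q by (simp add: Bf_def)
    next
      case (Suc r)
      have s1: "(2*q+1 choose Suc q) = (2*q+1 choose q)"
        using binomial_symmetric[of "Suc q" "2*q+1"] by simp
      show ?thesis using q Suc s1 by (simp add: Bf_def)
    qed
    also have "Suc q = (Suc i - k) div 2" using q 0 by simp
    finally show ?thesis .
  next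
    case (Suc k')
    show ?thesis
    proof (cases "k' = i")
      case True
      then show ?thesis using Suc by (simp add: Lp_diag Lp_above Bf_def)
    next
      case False
      have ev: "even (i + k')" using Suc.prems Suc by simp
      have "k' \<le> i" using Suc.prems Suc by simp
      with ev False have k'i: "k' + 2 \<le> i" "even (i + k')" by presburger+
      define s where "s = (i - k') div 2"
      have s1: "s \<ge> 1" using k'i by (simp add: s_def)
      have "int (Lp (Suc i) k) = int (Lp i k') + int (Lp i (Suc (Suc k')))" using Suc by simp
      also have "\<dots> = Bf i s + Bf i (s - 1)"
      proof -
        have a: "(i - Suc (Suc k')) div 2 = s - 1" unfolding s_def using k'i by presburger
        have b: "even (i + Suc (Suc k'))" using k'i by simp
        show ?thesis using Suc.IH[of k'] Suc.IH[of "Suc (Suc k')"] k'i a b unfolding s_def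
          by simp
      qed
      also have "\<dots> = Bf (Suc i) s"
        using s1 by (cases s; cases "s - 1") (auto simp: Bf_def)
      also have "s = (Suc i - k) div 2" using Suc k'i unfolding s_def by simp
      finally show ?thesis .
    qed
  qed
qed


lemma catalan_Lp: "catalan p = Lp (2*p) 0"
proof -
  have "int (2*p choose p) = int (p+1) * int (Lp (2*p) 0)"
  proof (cases p)
    case 0 then show ?thesis by simp
  next
    case (Suc r)
    have e: "Suc r * (Suc (r + Suc r) choose Suc r) = Suc (Suc r) * (Suc (r + Suc r) choose r)"
      by (rule Suc_times_binomial_add)
    have e2: "Suc (r + Suc r) = 2 * p" using Suc by simp
    have rp: "Suc r = p" using Suc by simp
    have e2': "Suc (r + p) = 2*p" using Suc by simp
    have e': "p * (2*p choose p) = Suc p * (2*p choose r)" using e unfolding rp e2' .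
    have "int (Lp (2*p) 0) = Bf (2*p) p" using Lp_formula[of 0 "2*p"] by simp
    also have "\<dots> = int (2*p choose p) - int (2*p choose r)" unfolding Bf_def using rp by auto
    finally have h: "int (Lp (2*p) 0) = int (2*p choose p) - int (2*p choose r)" .
    have e3: "int p * int (2*p choose p) = (int p + 1) * int (2*p choose r)"
      using arg_cong[OF e', of int] by (simp add: algebra_simps)
    have alg: "\<And>x y z::int. z*x = (z+1)*y \<Longrightarrow> x = (z+1)*(x-y)" by (simp add: algebra_simps)
    show ?thesis unfolding h using alg[OF e3] by (simp add: add.commute)
  qed
  then have "2*p choose p = (p+1) * Lp (2*p) 0" by (metis of_nat_eq_iff of_nat_mult)
  then show ?thesis unfolding catalan_def by (metis Suc_eq_plus1 nat.distinct(1) nonzero_mult_div_cancel_left)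
qed

definition mu :: "nat \<Rightarrow> 'a::field" where "mu N = of_nat (Lp N 0)"

lemma mu_eq: "mu N = (if even N then of_nat (catalan (N div 2)) else 0)"
  unfolding mu_def catalan_Lp by (auto simp: Lp_odd)

definition mseq :: "'a::field \<Rightarrow> 'a \<Rightarrow> nat \<Rightarrow> 'a" where
  "mseq X b N = X * b^N + (\<Sum>k=0..(int N - 1) div 2.
                 b^(nat (int N - 2*k - 1)) * of_nat (catalan (nat k)))"

definition cs :: "'a::field \<Rightarrow> nat \<Rightarrow> 'a" where
  "cs b N = (\<Sum>k<(N+1) div 2. b^(N - 2*k - 1) * of_nat (catalan k))"

lemma mseq_cs: "mseq X b N = X * b^N + cs b N"
proof -
  have "(\<Sum>k=0..(int N - 1) div 2. b^(nat (int N - 2*k - 1)) * of_nat (catalan (nat k)))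
      = (\<Sum>k<(N+1) div 2. b^(nat (int N - 2*int k - 1)) * of_nat (catalan (nat (int k))))"
  proof (rule sum.reindex_bij_witness[of _ int nat])
    fix a assume a: "a \<in> {0..(int N - 1) div 2}"
    show "int (nat a) = a" using a by simp
    have "2*a + 1 \<le> int N" using a by auto
    then have "2 * nat a + 1 \<le> N" using a by auto
    then show "nat a \<in> {..<(N + 1) div 2}" by auto
    show "b^(nat (int N - 2 * int (nat a) - 1)) * of_nat (catalan (nat (int (nat a)))) =
          b^(nat (int N - 2 * a - 1)) * of_nat (catalan (nat a))" using a by simp
  next
    fix c assume c: "c \<in> {..<(N + 1) div 2}"
    show "nat (int c) = c" by simp
    show "int c \<in> {0..(int N - 1) div 2}" using c by auto
  qed
  also have "\<dots> = cs b N" unfolding cs_def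
  proof (rule sum.cong)
    fix k assume "k \<in> {..<(N + 1) div 2}"
    have "nat (int N - 2*int k - 1) = N - 2*k - 1" by arith
    then show "b^(nat (int N - 2*int k - 1)) * of_nat (catalan (nat (int k))) = b^(N - 2*k - 1) * of_nat (catalan k)"
      by simp
  qed simp
  finally show ?thesis unfolding mseq_def by simp
qed

lemma cs_rec: "cs b (Suc N) = b * cs b N + mu N"
proof (cases "even N")
  case True
  then obtain p where p: "N = 2*p" by (rule evenE)
  have r1: "(Suc N + 1) div 2 = Suc p" "(N+1) div 2 = p" using p by simp_all
  have "cs b (Suc N) = (\<Sum>k<p. b^(Suc N - 2*k - 1) * of_nat (catalan k)) + of_nat (catalan p)"
    unfolding cs_def r1 using p by simp
  also have "(\<Sum>k<p. b^(Suc N - 2*k - 1) * of_nat (catalan k)) = b * cs b N"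
    unfolding cs_def r1 sum_distrib_left
  proof (rule sum.cong)
    fix k assume "k \<in> {..<p}"
    then have "Suc N - 2*k - 1 = Suc (N - 2*k - 1)" using p by simp
    then show "b^(Suc N - 2*k - 1) * of_nat (catalan k) = b * (b^(N - 2*k - 1) * of_nat (catalan k))"
      by simp
  qed simp
  finally show ?thesis using True p by (simp add: mu_eq)
next
  case False
  then obtain p where p: "N = 2*p+1" by (rule oddE)
  have r1: "(Suc N + 1) div 2 = Suc p" "(N+1) div 2 = Suc p" using p by simp_all
  have "cs b (Suc N) = b * cs b N"
    unfolding cs_def r1 sum_distrib_left
  proof (rule sum.cong)
    fix k assume "k \<in> {..<Suc p}"
    then have "Suc N - 2*k - 1 = Suc (N - 2*k - 1)" using p by simp
    then show "b^(Suc N - 2*k - 1) * of_nat (catalan k) = b * (b^(N - 2*k - 1) * of_nat (catalan k))"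
      by simp
  qed simp
  then show ?thesis using False by (simp add: mu_eq)
qed

lemma mseq_rec: "mseq X b (Suc N) = b * mseq X b N + mu N"
  unfolding mseq_cs cs_rec by (simp add: algebra_simps)

lemma mseq_0: "mseq X b 0 = X"
  unfolding mseq_cs cs_def by simp


lemma shiftsum:
  fixes f g :: "nat \<Rightarrow> nat"
  assumes "f M = 0"
  shows "(\<Sum>k<Suc M. (case k of 0 \<Rightarrow> 0 | Suc k' \<Rightarrow> f k') * g k) = (\<Sum>k<Suc M. f k * g (Suc k))"
proof -
  have L: "(\<Sum>k<Suc M. (case k of 0 \<Rightarrow> 0 | Suc k' \<Rightarrow> f k') * g k) = (\<Sum>k<M. f k * g (Suc k))"
    by (simp add: sum.lessThan_Suc_shift del: sum.lessThan_Suc)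
  have R: "(\<Sum>k<Suc M. f k * g (Suc k)) = (\<Sum>k<M. f k * g (Suc k)) + f M * g (Suc M)"
    by (rule sum.lessThan_Suc)
  show ?thesis unfolding L R using assms by simp
qed

definition Sn :: "nat \<Rightarrow> nat \<Rightarrow> nat" where
  "Sn i j = (\<Sum>k<Suc (i+j). Lp i k * Lp j k)"

lemma Sn_shift: "Sn (Suc i) j = Sn i (Suc j)"
proof -
  let ?M = "Suc (i + j)"
  have "Sn (Suc i) j = (\<Sum>k<Suc ?M. (case k of 0 \<Rightarrow> 0 | Suc k' \<Rightarrow> Lp i k') * Lp j k)
      + (\<Sum>k<Suc ?M. Lp i (Suc k) * Lp j k)"
    unfolding Sn_def by (simp add: sum.distrib algebra_simps del: sum.lessThan_Suc)
  also have "(\<Sum>k<Suc ?M. (case k of 0 \<Rightarrow> 0 | Suc k' \<Rightarrow> Lp i k') * Lp j k)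
      = (\<Sum>k<Suc ?M. Lp i k * Lp j (Suc k))"
    by (rule shiftsum) (simp add: Lp_above)
  also have "(\<Sum>k<Suc ?M. Lp i (Suc k) * Lp j k) = (\<Sum>k<Suc ?M. (case k of 0 \<Rightarrow> 0 | Suc k' \<Rightarrow> Lp j k') * Lp i k)"
    by (subst shiftsum) (simp_all add: Lp_above mult.commute)
  also have "(\<Sum>k<Suc ?M. Lp i k * Lp j (Suc k)) + (\<Sum>k<Suc ?M. (case k of 0 \<Rightarrow> 0 | Suc k' \<Rightarrow> Lp j k') * Lp i k)
     = Sn i (Suc j)"
    unfolding Sn_def by (simp add: sum.distrib algebra_simps del: sum.lessThan_Suc)
  finally show ?thesis .
qed

lemma Sn_hankel: "Sn i j = Lp (i + j) 0"
proof (induction i arbitrary: j)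
  case 0
  then show ?case unfolding Sn_def by (simp add: sum.lessThan_Suc_shift del: sum.lessThan_Suc)
next
  case (Suc i)
  then show ?case using Sn_shift by simp
qed

lemma Lp_trunc:
  fixes f :: "nat \<Rightarrow> 'a::comm_ring_1"
  assumes "i < N" "i < N'"
  shows "(\<Sum>k<N. of_nat (Lp i k) * f k) = (\<Sum>k<N'. of_nat (Lp i k) * f k)"
proof -
  have "(\<Sum>k<N. of_nat (Lp i k) * f k) = (\<Sum>k<Suc i. of_nat (Lp i k) * f k)" if "i < N" for N
    by (rule sum.mono_neutral_right) (use that in \<open>auto simp: Lp_above\<close>)
  then show ?thesis using assms by metis
qed

lemma Lp_gram:
  assumes "i < N" "j < N"
  shows "(\<Sum>k<N. of_nat (Lp i k) * of_nat (Lp j k)) = (of_nat (Lp (i+j) 0) :: 'a::comm_ring_1)"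
proof -
  have "(\<Sum>k<N. of_nat (Lp i k) * of_nat (Lp j k)) = (\<Sum>k<Suc (i+j). of_nat (Lp i k) * (of_nat (Lp j k)::'a))"
    by (rule Lp_trunc) (use assms in auto)
  also have "\<dots> = of_nat (Sn i j)" unfolding Sn_def by simp
  finally show ?thesis by (simp add: Sn_hankel)
qed



lemma prod3_mat:
  "mat n n f * mat n n g * transpose_mat (mat n n h)
     = mat n n (\<lambda>(i,j). \<Sum>l<n. (\<Sum>k<n. f (i,k) * g (k,l)) * h (j,l))"
  by (rule eq_matI) (auto simp: scalar_prod_def atLeast0LessThan intro!: sum.cong)

lemma det_prod3:
  fixes A B C :: "'a::comm_ring_1 mat"
  assumes "A \<in> carrier_mat n n" "B \<in> carrier_mat n n" "C \<in> carrier_mat n n" "det A = 1" "det C = 1"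
  shows "det (A * B * transpose_mat C) = det B"
proof -
  have "det (A * B * transpose_mat C) = det (A * B) * det (transpose_mat C)"
    by (rule det_mult) (use assms in auto)
  also have "\<dots> = det A * det B * det C"
    using assms by (simp add: det_mult det_transpose)
  finally show ?thesis using assms by simp
qed

lemma det_unitri:
  fixes f :: "nat \<times> nat \<Rightarrow> 'a::comm_ring_1"
  assumes "\<And>i j. i < j \<Longrightarrow> f (i,j) = 0" "\<And>i. f (i,i) = 1"
  shows "det (mat n n f) = 1"
proof -
  have "det (mat n n f) = prod_list (diag_mat (mat n n f))"
    by (rule det_lower_triangular[of n]) (use assms in auto)
  also have "diag_mat (mat n n f) = map (\<lambda>_. 1) [0..<n]"
    unfolding diag_mat_def using assms by (auto intro!: map_cong)
  finally show ?thesis by (simp add: map_replicate_const)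
qed

lemma tridiag_det:
  fixes t :: "nat \<Rightarrow> nat \<Rightarrow> 'a::comm_ring_1"
  assumes b1: "\<And>i j. Suc i < j \<Longrightarrow> t i j = 0" and b2: "\<And>i j. Suc j < i \<Longrightarrow> t i j = 0"
  shows "det (mat (Suc (Suc n)) (Suc (Suc n)) (\<lambda>(i,j). t i j))
    = t (Suc n) (Suc n) * det (mat (Suc n) (Suc n) (\<lambda>(i,j). t i j))
      - t n (Suc n) * t (Suc n) n * det (mat n n (\<lambda>(i,j). t i j))"
proof -
  define A where "A = mat (Suc (Suc n)) (Suc (Suc n)) (\<lambda>(i,j). t i j)"
  have A: "A \<in> carrier_mat (Suc (Suc n)) (Suc (Suc n))" unfolding A_def by simp
  have d1: "det A = (\<Sum>i<Suc (Suc n). A $$ (i, Suc n) * cofactor A i (Suc n))"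
    by (rule laplace_expansion_column[OF A]) simp
  have d2: "(\<Sum>i<Suc (Suc n). A $$ (i, Suc n) * cofactor A i (Suc n)) = (\<Sum>i<n. A $$ (i, Suc n) * cofactor A i (Suc n))
      + A $$ (n, Suc n) * cofactor A n (Suc n) + A $$ (Suc n, Suc n) * cofactor A (Suc n) (Suc n)"
    by simp
  have z: "(\<Sum>i<n. A $$ (i, Suc n) * cofactor A i (Suc n)) = 0"
    by (rule sum.neutral) (auto simp: A_def b1)
  have md: "mat_delete A (Suc n) (Suc n) = mat (Suc n) (Suc n) (\<lambda>(i,j). t i j)"
    unfolding mat_delete_def A_def by (rule eq_matI) auto
  have cf: "cofactor A n (Suc n) = - (t (Suc n) n * det (mat n n (\<lambda>(i,j). t i j)))"
  proof -
    define B where "B = mat_delete A n (Suc n)"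
    have B: "B = mat (Suc n) (Suc n) (\<lambda>(i,j). t (if i < n then i else Suc i) j)"
      unfolding B_def mat_delete_def A_def by (rule eq_matI) auto
    have Bc: "B \<in> carrier_mat (Suc n) (Suc n)" unfolding B by simp
    have e1: "det B = (\<Sum>j<Suc n. B $$ (n, j) * cofactor B n j)"
      by (rule laplace_expansion_row[OF Bc]) simp
    have e2: "(\<Sum>j<Suc n. B $$ (n, j) * cofactor B n j) = (\<Sum>j<n. B $$ (n, j) * cofactor B n j) + B $$ (n, n) * cofactor B n n"
      by simp
    have e3: "(\<Sum>j<n. B $$ (n, j) * cofactor B n j) = 0"
      by (rule sum.neutral) (auto simp: B b2)
    have e4: "mat_delete B n n = mat n n (\<lambda>(i,j). t i j)"
      unfolding mat_delete_def B by (rule eq_matI) auto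
    have "det B = t (Suc n) n * det (mat n n (\<lambda>(i,j). t i j))"
      using e1 e2 e3 e4 by (simp add: B cofactor_def)
    then show ?thesis unfolding cofactor_def B_def[symmetric] by simp
  qed
  have c2: "cofactor A (Suc n) (Suc n) = det (mat (Suc n) (Suc n) (\<lambda>(i,j). t i j))"
    unfolding cofactor_def md by simp
  have a1: "A $$ (n, Suc n) = t n (Suc n)" "A $$ (Suc n, Suc n) = t (Suc n) (Suc n)"
    by (simp_all add: A_def)
  have "det A = t (Suc n) (Suc n) * det (mat (Suc n) (Suc n) (\<lambda>(i,j). t i j))
      - t n (Suc n) * t (Suc n) n * det (mat n n (\<lambda>(i,j). t i j))"
    unfolding d1 d2 z c2 cf a1 by (simp add: algebra_simps)
  then show ?thesis unfolding A_def .
qed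


definition rf :: "'a::field \<Rightarrow> nat \<Rightarrow> nat \<Rightarrow> 'a" where
  "rf b i k = (if k = i then 1 else if Suc k = i then -b else 0)"

lemma rsum:
  fixes g :: "nat \<Rightarrow> 'a::field"
  assumes "i < n"
  shows "(\<Sum>k<n. rf b i k * g k) = g i - (if i = 0 then 0 else b * g (i - 1))"
proof (cases i)
  case 0
  have "(\<Sum>k<n. rf b i k * g k) = (\<Sum>k<n. if k = i then g i else 0)"
    by (rule sum.cong) (auto simp: rf_def 0)
  then show ?thesis using assms 0 by simp
next
  case (Suc i')
  have "(\<Sum>k<n. rf b i k * g k) = (\<Sum>k<n. (if k = i then g i else 0) + (if k = i' then - b * g i' else 0))"
    by (rule sum.cong) (auto simp: rf_def Suc)
  also have "\<dots> = g i - b * g i'" using assms Suc by (simp add: sum.distrib)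
  finally show ?thesis using Suc by simp
qed

definition kI :: "'a::field \<Rightarrow> 'a \<Rightarrow> nat \<Rightarrow> nat \<Rightarrow> 'a" where
  "kI X b i j = (if i = 0 \<and> j = 0 then X else if i = 0 then mu (j-1) else if j = 0 then mu (i-1)
     else mu (i+j-1) - b * mu (i+j-2))"

lemma RMR:
  "mat n n (\<lambda>(i,k). rf b i k) * mat n n (\<lambda>(i,j). mseq X b (i+j)) * transpose_mat (mat n n (\<lambda>(i,k). rf b i k))
    = mat n n (\<lambda>(i,j). kI X b i j)"
  unfolding prod3_mat
proof (rule eq_matI)
  fix i j assume i: "i < dim_row (mat n n (\<lambda>(i,j). kI X b i j))" and j: "j < dim_col (mat n n (\<lambda>(i,j). kI X b i j))"
  then have i: "i < n" and j: "j < n" by auto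
  define h where "h l = (if i = 0 then mseq X b l else mu (i - 1 + l))" for l
  have inner: "(\<Sum>k<n. rf b i k * mseq X b (k + l)) = h l" for l
  proof -
    have "(\<Sum>k<n. rf b i k * mseq X b (k + l)) = mseq X b (i + l) - (if i = 0 then 0 else b * mseq X b (i - 1 + l))"
      using rsum[OF i, of b "\<lambda>k. mseq X b (k + l)"] by simp
    also have "\<dots> = h l"
    proof (cases i)
      case (Suc i')
      then show ?thesis unfolding h_def using mseq_rec[of X b "i' + l"] by simp
    qed (simp add: h_def)
    finally show ?thesis .
  qed
  have "(\<Sum>l<n. (\<Sum>k<n. rf b i k * mseq X b (k + l)) * rf b j l) = (\<Sum>l<n. rf b j l * h l)"
    using inner by (simp add: mult.commute)
  also have "\<dots> = h j - (if j = 0 then 0 else b * h (j - 1))" by (rule rsum[OF j])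
  also have "\<dots> = kI X b i j"
  proof (cases i)
    case 0
    then show ?thesis
    proof (cases j)
      case (Suc j')
      then show ?thesis using 0 mseq_rec[of X b j'] by (simp add: h_def kI_def)
    qed (simp add: h_def kI_def mseq_0)
  next
    case (Suc i')
    then show ?thesis
    proof (cases j)
      case (Suc j')
      have "i + j - 2 = i' + j'" "i + j - 1 = Suc (i' + j')" using Suc \<open>i = Suc i'\<close> by auto
      then show ?thesis using \<open>i = Suc i'\<close> Suc by (simp add: h_def kI_def)
    qed (simp add: h_def kI_def)
  qed
  finally show "mat n n (\<lambda>(i,j). \<Sum>l<n. (\<Sum>k<n. (case (i,k) of (i,k) \<Rightarrow> rf b i k) * (case (k,l) of (i,j) \<Rightarrow> mseq X b (i+j))) * (case (j,l) of (i,k) \<Rightarrow> rf b i k)) $$ (i,j)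
      = mat n n (\<lambda>(i,j). kI X b i j) $$ (i,j)"
    using i j by simp
qed auto


definition tf :: "'a::field \<Rightarrow> 'a \<Rightarrow> nat \<Rightarrow> nat \<Rightarrow> 'a" where
  "tf X b k l = (if k = l then (if k = 0 then X else -b) else if l = Suc k \<or> k = Suc l then 1 else 0)"

definition pf :: "nat \<Rightarrow> nat \<Rightarrow> 'a::field" where
  "pf i k = (if i = 0 then (if k = 0 then 1 else 0) else if k = 0 then 0 else of_nat (Lp (i-1) (k-1)))"

lemma pf_above: "i < k \<Longrightarrow> pf i k = 0"
  by (auto simp: pf_def Lp_above)

lemma tsum:
  fixes g :: "nat \<Rightarrow> 'a::field"
  assumes l: "l < n" and g: "\<And>k. n \<le> k \<Longrightarrow> g k = 0"
  shows "(\<Sum>k<n. g k * tf X b k l) = (if l = 0 then X * g 0 + g 1 else g (l-1) - b * g l + g (Suc l))"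
proof -
  have "(\<Sum>k<n. g k * tf X b k l) = (\<Sum>k<n. (if k = l then g l * (if l = 0 then X else -b) else 0)
      + (if k = Suc l then g (Suc l) else 0) + (if l \<noteq> 0 \<and> k = l - 1 then g (l-1) else 0))"
    by (rule sum.cong) (auto simp: tf_def)
  also have "\<dots> = g l * (if l = 0 then X else -b) + g (Suc l) + (if l \<noteq> 0 then g (l-1) else 0)"
    using l g[of "Suc l"] by (simp add: sum.distrib) (auto intro: g)
  finally show ?thesis by (cases l) (auto simp: algebra_simps)
qed

lemma PTP:
  "mat n n (\<lambda>(i,k). pf i k) * mat n n (\<lambda>(k,l). tf X b k l) * transpose_mat (mat n n (\<lambda>(i,k). pf i k))
    = mat n n (\<lambda>(i,j). kI X b i j)"
  unfolding prod3_mat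
proof (rule eq_matI)
  fix i j assume i: "i < dim_row (mat n n (\<lambda>(i,j). kI X b i j))" and j: "j < dim_col (mat n n (\<lambda>(i,j). kI X b i j))"
  then have i: "i < n" and j: "j < n" by auto
  define u where "u l = (if i = 0 then (if l = 0 then X else if l = 1 then 1 else 0)
     else (case l of 0 \<Rightarrow> of_nat (Lp (i-1) 0) | Suc l' \<Rightarrow> of_nat (Lp i l') - b * of_nat (Lp (i-1) l')))" for l
  have inner: "(\<Sum>k<n. pf i k * tf X b k l) = u l" if l: "l < n" for l
  proof -
    have "(\<Sum>k<n. pf i k * tf X b k l) = (if l = 0 then X * pf i 0 + pf i 1 else pf i (l-1) - b * pf i l + pf i (Suc l))"
      by (rule tsum[OF l]) (use i in \<open>auto simp: pf_above\<close>)
    also have "\<dots> = u l"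
    proof (cases i)
      case 0 then show ?thesis by (auto simp: u_def pf_def)
    next
      case (Suc i')
      show ?thesis
      proof (cases l)
        case 0 then show ?thesis using Suc by (simp add: u_def pf_def)
      next
        case (Suc l')
        have "of_nat (Lp (Suc i') l') = (of_nat (case l' of 0 \<Rightarrow> 0 | Suc m \<Rightarrow> Lp i' m) + of_nat (Lp i' (Suc l')) :: 'a)"
          by simp
        then show ?thesis using Suc \<open>i = Suc i'\<close> by (cases l') (auto simp: u_def pf_def)
      qed
    qed
    finally show ?thesis .
  qed
  have "(\<Sum>l<n. (\<Sum>k<n. pf i k * tf X b k l) * pf j l) = (\<Sum>l<n. u l * pf j l)"
    using inner by simp
  also have "\<dots> = kI X b i j"
  proof (cases j)
    case 0
    have "(\<Sum>l<n. u l * pf j l) = (\<Sum>l<n. if l = 0 then u 0 else 0)"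
      by (rule sum.cong) (auto simp: pf_def 0)
    also have "\<dots> = u 0" using j by simp
    finally show ?thesis using 0 by (auto simp: u_def kI_def mu_def)
  next
    case (Suc j')
    obtain n' where n': "n = Suc n'" using j by (cases n) auto
    have j': "j' < n'" using j Suc n' by simp
    have "(\<Sum>l<n. u l * pf j l) = (\<Sum>l<n'. u (Suc l) * of_nat (Lp j' l))"
      unfolding n' sum.lessThan_Suc_shift by (simp add: pf_def Suc)
    also have "\<dots> = kI X b i j"
    proof (cases i)
      case 0
      have "(\<Sum>l<n'. u (Suc l) * of_nat (Lp j' l)) = (\<Sum>l<n'. if l = 0 then of_nat (Lp j' 0) else 0)"
        by (rule sum.cong) (auto simp: u_def 0)
      also have "\<dots> = of_nat (Lp j' 0)" using j' by simp
      finally show ?thesis using 0 Suc by (simp add: kI_def mu_def)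
    next
      case (Suc i')
      have "(\<Sum>l<n'. u (Suc l) * of_nat (Lp j' l)) =
          (\<Sum>l<n'. of_nat (Lp j' l) * of_nat (Lp (Suc i') l)) - b * (\<Sum>l<n'. of_nat (Lp j' l) * of_nat (Lp i' l))"
        by (simp add: u_def Suc sum_subtractf sum_distrib_left algebra_simps)
      also have "(\<Sum>l<n'. of_nat (Lp j' l) * of_nat (Lp (Suc i') l)) = (\<Sum>l<Suc (j' + Suc i'). of_nat (Lp j' l) * (of_nat (Lp (Suc i') l) :: 'a))"
        by (rule Lp_trunc) (use j' in auto)
      also have "\<dots> = of_nat (Lp (j' + Suc i') 0)" by (rule Lp_gram) auto
      also have "(\<Sum>l<n'. of_nat (Lp j' l) * of_nat (Lp i' l)) = (\<Sum>l<Suc (j' + i'). of_nat (Lp j' l) * (of_nat (Lp i' l) :: 'a))"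
        by (rule Lp_trunc) (use j' in auto)
      also have "\<dots> = of_nat (Lp (j' + i') 0)" by (rule Lp_gram) auto
      finally show ?thesis using Suc \<open>j = Suc j'\<close> by (simp add: kI_def mu_def add.commute)
    qed
    finally show ?thesis .
  qed
  finally show "mat n n (\<lambda>(i,j). \<Sum>l<n. (\<Sum>k<n. (case (i,k) of (i,k) \<Rightarrow> pf i k) * (case (k,l) of (k,l) \<Rightarrow> tf X b k l)) * (case (j,l) of (i,k) \<Rightarrow> pf i k)) $$ (i,j)
      = mat n n (\<lambda>(i,j). kI X b i j) $$ (i,j)"
    using i j by simp
qed auto


lemma detT_rec:
  "det (mat (Suc (Suc n)) (Suc (Suc n)) (\<lambda>(k,l). tf X b k l))
    = - b * det (mat (Suc n) (Suc n) (\<lambda>(k,l). tf X b k l)) - det (mat n n (\<lambda>(k,l). tf X b k l))"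
proof -
  have "det (mat (Suc (Suc n)) (Suc (Suc n)) (\<lambda>(k,l). tf X b k l))
    = tf X b (Suc n) (Suc n) * det (mat (Suc n) (Suc n) (\<lambda>(k,l). tf X b k l))
      - tf X b n (Suc n) * tf X b (Suc n) n * det (mat n n (\<lambda>(k,l). tf X b k l))"
    by (rule tridiag_det) (auto simp: tf_def)
  then show ?thesis by (simp add: tf_def)
qed

lemma detT_0: "det (mat 0 0 (\<lambda>(k,l). tf X b k l)) = 1"
  by (rule det_dim_zero) simp

lemma detT_1: "det (mat 1 1 (\<lambda>(k,l). tf X b k l)) = X"
  by (subst det_single) (auto simp: tf_def)

lemma detT_W:
  fixes X a :: "'a::field"
  defines "V \<equiv> \<lambda>n. det (mat n n (\<lambda>(k,l). tf X (-2*a) k l))"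
  defines "W \<equiv> \<lambda>n::nat. (-1)^(n-1) * (X * chebU (-a) (int n - 1) + chebU (-a) (int n - 2))"
  shows "V (Suc n) = W (Suc n) \<and> V (Suc (Suc n)) = W (Suc (Suc n))"
proof (induction n)
  case 0
  have u1: "chebU (-a) 1 = 2 * (-a)" using chebU_rec[of 1 "-a"] by (simp add: chebU_0 chebU_def)
  have "V 1 = X" unfolding V_def by (rule detT_1)
  moreover have "W 1 = X" unfolding W_def by (simp add: chebU_0 chebU_def)
  moreover have "V 2 = 2 * a * X - 1" unfolding V_def using detT_rec[of 0 X "-2*a"] detT_1[of X "-2*a"] detT_0[of X "-2*a"]
    by (simp add: numeral_2_eq_2)
  moreover have "W 2 = 2 * a * X - 1" unfolding W_def using u1 by (simp add: chebU_0)
  ultimately show ?case by (simp add: numeral_2_eq_2)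
next
  case (Suc n)
  let ?U = "chebU (-a)"
  have e: "int n + 2 - 1 = int n + 1" "int n + 2 - 2 = int n" "int n + 1 - 1 = int n" "int n + 1 - 2 = int n - 1"
    by simp_all
  have h1: "?U (int n + 2) = 2*(-a) * ?U (int n + 1) - ?U (int n)"
    by (rule chebU_rec[of "int n + 2" "-a", unfolded e]) simp
  have h2: "?U (int n + 1) = 2*(-a) * ?U (int n) - ?U (int n - 1)"
    by (rule chebU_rec[of "int n + 1" "-a", unfolded e]) simp
  have w1: "W (Suc n) = (-1)^n * (X * ?U (int n) + ?U (int n - 1))" unfolding W_def by simp
  have w2: "W (Suc (Suc n)) = - ((-1)^n * (X * ?U (int n + 1) + ?U (int n)))" unfolding W_def by (simp add: add.commute)
  have w3: "W (Suc (Suc (Suc n))) = (-1)^n * (X * ?U (int n + 2) + ?U (int n + 1))"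
    unfolding W_def by (simp add: add.commute)
  have v3: "V (Suc (Suc (Suc n))) = 2 * a * V (Suc (Suc n)) - V (Suc n)"
    unfolding V_def using detT_rec[of "Suc n" X "-2*a"] by simp
  have i1: "V (Suc n) = (-1)^n * (X * ?U (int n) + ?U (int n - 1))" using Suc.IH w1 by simp
  have i2: "V (Suc (Suc n)) = - ((-1)^n * (X * ?U (int n + 1) + ?U (int n)))" using Suc.IH w2 by simp
  have "V (Suc (Suc (Suc n))) = W (Suc (Suc (Suc n)))"
    unfolding v3 i1 i2 w3 h1 h2 by (simp add: algebra_simps)
  then show ?case using Suc.IH by simp
qed

theorem theorem14:
  fixes X a :: "'a::field" and n :: nat
  assumes "n \<ge> 1"
  shows "det (mat n n (\<lambda>(i,j).
            X * (-2*a)^(i+j)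
            + (\<Sum>k=0..(int (i+j) - 1) div 2.
                 (-2*a)^(nat (int (i+j) - 2*k - 1)) * of_nat (catalan (nat k)))))
         = (-1)^(n-1) * (X * chebU (-a) (int n - 1) + chebU (-a) (int n - 2))"
proof -
  let ?b = "-2*a"
  have M: "mat n n (\<lambda>(i,j).
            X * (-2*a)^(i+j)
            + (\<Sum>k=0..(int (i+j) - 1) div 2.
                 (-2*a)^(nat (int (i+j) - 2*k - 1)) * of_nat (catalan (nat k))))
        = mat n n (\<lambda>(i,j). mseq X ?b (i+j))"
    by (simp add: mseq_def)
  have dR: "det (mat n n (\<lambda>(i,k). rf ?b i k)) = 1"
    by (rule det_unitri) (auto simp: rf_def)
  have dP: "det (mat n n (\<lambda>(i,k). pf i k) :: 'a mat) = 1"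
  proof (rule det_unitri)
    fix i j :: nat assume "i < j" then show "(case (i,j) of (i,k) \<Rightarrow> pf i k) = (0::'a)" by (simp add: pf_above)
  next
    fix i show "(case (i,i) of (i,k) \<Rightarrow> pf i k) = (1::'a)" by (simp add: pf_def Lp_diag)
  qed
  have "det (mat n n (\<lambda>(i,j). mseq X ?b (i+j)))
      = det (mat n n (\<lambda>(i,k). rf ?b i k) * mat n n (\<lambda>(i,j). mseq X ?b (i+j)) * transpose_mat (mat n n (\<lambda>(i,k). rf ?b i k)))"
    by (rule det_prod3[symmetric]) (use dR in auto)
  also have "\<dots> = det (mat n n (\<lambda>(i,j). kI X ?b i j))" by (simp only: RMR)
  also have "\<dots> = det (mat n n (\<lambda>(i,k). pf i k) * mat n n (\<lambda>(k,l). tf X ?b k l) * transpose_mat (mat n n (\<lambda>(i,k). pf i k)))"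
    by (simp only: PTP)
  also have "\<dots> = det (mat n n (\<lambda>(k,l). tf X ?b k l))"
    by (rule det_prod3) (use dP in auto)
  also have "\<dots> = (-1)^(n-1) * (X * chebU (-a) (int n - 1) + chebU (-a) (int n - 2))"
  proof -
    obtain m where m: "n = Suc m" using assms by (cases n) auto
    show ?thesis using detT_W[where X=X and a=a and n=m] unfolding m by simp
  qed
  finally show ?thesis unfolding M .
qed

end
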